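(* Let $k\geq3$, $A=\{0,1,\dots,k-1\}$, $N=k-1$ and let $T\colon A^{N^2}\to A$ be given by $T(x_{1,1},\dots,x_{1,N},\dots,x_{N,1},\dots,x_{N,N})=1$ if $x_{i,j}=i$ for all $i,j\in\{1,\dots,N\}$ or $x_{i,j}=j$ for all $i,j\in\{1,\dots,N\}$, and $0$ otherwise. Then for all $1\leq n<k-1$, \[\langle\{T\}\rangle^{(n)}=J_n(A)\cup\{c^n_0\},\] where $c^n_0$ is the $n$-ary constant zero function.
   Context: $\langle\{T\}\rangle$ denotes the clone generated by $T$ (all term operations of positive arity of the algebra $(A;T)$, including projections), and $\langle\{T\}\rangle^{(n)}$ its $n$-ary members. $J_n(A)$ is the set of $n$-ary projections $(x_1,\dots,x_n)\mapsto x_i$, $1\leq i\leq n$. *)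

theory Defs
  imports Main
begin

text \<open>An n-ary operation is identified with its restriction to A^n
  (lists of length n with entries in A); outside it the value is undefined.\<close>

definition restr :: "nat \<Rightarrow> nat \<Rightarrow> (nat list \<Rightarrow> nat) \<Rightarrow> (nat list \<Rightarrow> nat)" where
  "restr k n f = (\<lambda>xs. if length xs = n \<and> set xs \<subseteq> {..<k} then f xs else undefined)"

inductive_set term_op :: "nat \<Rightarrow> (nat list \<Rightarrow> nat) \<Rightarrow> nat \<Rightarrow> (nat list \<Rightarrow> nat) set"
  for m :: nat and T :: "nat list \<Rightarrow> nat" and n :: nat where
  proj: "i < n \<Longrightarrow> (\<lambda>xs. xs ! i) \<in> term_op m T n"
| app: "(\<And>j. j < m \<Longrightarrow> gs j \<in> term_op m T n) \<Longrightarrow>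
        (\<lambda>xs. T (map (\<lambda>j. gs j xs) [0..<m])) \<in> term_op m T n"

definition clone_n :: "nat \<Rightarrow> nat \<Rightarrow> (nat list \<Rightarrow> nat) \<Rightarrow> nat \<Rightarrow> (nat list \<Rightarrow> nat) set" where
  "clone_n k m T n = restr k n ` term_op m T n"

definition projections :: "nat \<Rightarrow> nat \<Rightarrow> (nat list \<Rightarrow> nat) set" where
  "projections k n = {restr k n (\<lambda>xs. xs ! i) | i. i < n}"

text \<open>The operation T of arity N^2, N = k - 1; the argument x_{i,j} (1 \<le> i,j \<le> N)
  sits at list position (i-1)*N + (j-1).\<close>
definition T_op :: "nat \<Rightarrow> nat list \<Rightarrow> nat" where
  "T_op k xs = (let N = k - 1 in
     if (\<forall>i\<in>{1..N}. \<forall>j\<in>{1..N}. xs ! ((i - 1) * N + (j - 1)) = i) \<or>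
        (\<forall>i\<in>{1..N}. \<forall>j\<in>{1..N}. xs ! ((i - 1) * N + (j - 1)) = j)
     then 1 else 0)"

end

theory Submission
  imports Defs
begin

lemma idx_lt:
  fixes N i j :: nat
  assumes "1 \<le> i" "i \<le> N" "1 \<le> j" "j \<le> N"
  shows "(i - 1) * N + (j - 1) < N^2"
proof -
  have "(i - 1) * N + (j - 1) < (i - 1) * N + N" using assms by simp
  also have "\<dots> = i * N" using assms by (cases i) auto
  also have "\<dots> \<le> N * N" using assms by simp
  finally show ?thesis by (simp add: power2_eq_square)
qed

lemma card_bound:
  fixes N n :: nat and xs :: "nat list"
  assumes "{1..N} \<subseteq> set xs" "length xs = n" "n < N"
  shows False
proof -
  have "card {1..N} \<le> card (set xs)" using assms(1) by (intro card_mono) auto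
  also have "\<dots> \<le> length xs" by (rule card_length)
  finally show False using assms by simp
qed

lemma key:
  fixes k n :: nat and gs :: "nat \<Rightarrow> nat list \<Rightarrow> nat" and xs :: "nat list"
  assumes "k \<ge> 3" "n < k - 1" "length xs = n"
    and g: "\<And>j. j < (k - 1)^2 \<Longrightarrow> gs j xs \<in> insert 0 (set xs)"
  shows "T_op k (map (\<lambda>j. gs j xs) [0..<(k - 1)^2]) = 0"
proof (rule ccontr)
  define N where "N = k - 1"
  assume "T_op k (map (\<lambda>j. gs j xs) [0..<(k - 1)^2]) \<noteq> 0"
  have nth: "\<And>i j. i\<in>{1..N} \<Longrightarrow> j\<in>{1..N} \<Longrightarrow>
      map (\<lambda>j. gs j xs) [0..<(k - 1)^2] ! ((i - 1) * N + (j - 1)) = gs ((i - 1) * N + (j - 1)) xs"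
  proof -
    fix i j assume "i\<in>{1..N}" "j\<in>{1..N}"
    hence "(i - 1) * N + (j - 1) < N^2" by (intro idx_lt) auto
    hence "(i - 1) * N + (j - 1) < (k - 1)^2" unfolding N_def .
    thus "map (\<lambda>j. gs j xs) [0..<(k - 1)^2] ! ((i - 1) * N + (j - 1)) = gs ((i - 1) * N + (j - 1)) xs"
      by simp
  qed
  define L where "L = map (\<lambda>j. gs j xs) [0..<(k - 1)^2]"
  have TL: "T_op k L = (if (\<forall>i\<in>{1..N}. \<forall>j\<in>{1..N}. L ! ((i - 1) * N + (j - 1)) = i) \<or>
        (\<forall>i\<in>{1..N}. \<forall>j\<in>{1..N}. L ! ((i - 1) * N + (j - 1)) = j) then 1 else 0)"
    unfolding T_op_def Let_def N_def by (rule refl)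
  have c0: "(\<forall>i\<in>{1..N}. \<forall>j\<in>{1..N}. L ! ((i - 1) * N + (j - 1)) = i) \<or>
        (\<forall>i\<in>{1..N}. \<forall>j\<in>{1..N}. L ! ((i - 1) * N + (j - 1)) = j)"
  proof (rule ccontr)
    assume "\<not> ?thesis"
    hence "T_op k L = 0" unfolding TL by (simp only: if_False)
    thus False using \<open>T_op k _ \<noteq> 0\<close> unfolding L_def by simp
  qed
  have c: "(\<forall>i\<in>{1..N}. \<forall>j\<in>{1..N}. gs ((i - 1) * N + (j - 1)) xs = i) \<or>
        (\<forall>i\<in>{1..N}. \<forall>j\<in>{1..N}. gs ((i - 1) * N + (j - 1)) xs = j)"
  proof (rule disjE[OF c0])
    assume r: "\<forall>i\<in>{1..N}. \<forall>j\<in>{1..N}. L ! ((i - 1) * N + (j - 1)) = i"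
    have "\<forall>i\<in>{1..N}. \<forall>j\<in>{1..N}. gs ((i - 1) * N + (j - 1)) xs = i"
    proof (intro ballI)
      fix i j assume ij: "i\<in>{1..N}" "j\<in>{1..N}"
      have e1: "L ! ((i - 1) * N + (j - 1)) = i" using r ij by blast
      have e2: "L ! ((i - 1) * N + (j - 1)) = gs ((i - 1) * N + (j - 1)) xs"
        using nth[OF ij] unfolding L_def .
      show "gs ((i - 1) * N + (j - 1)) xs = i" using e1 e2 by simp
    qed
    thus ?thesis by (rule disjI1)
  next
    assume r: "\<forall>i\<in>{1..N}. \<forall>j\<in>{1..N}. L ! ((i - 1) * N + (j - 1)) = j"
    have "\<forall>i\<in>{1..N}. \<forall>j\<in>{1..N}. gs ((i - 1) * N + (j - 1)) xs = j"
    proof (intro ballI)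
      fix i j assume ij: "i\<in>{1..N}" "j\<in>{1..N}"
      have e1: "L ! ((i - 1) * N + (j - 1)) = j" using r ij by blast
      have e2: "L ! ((i - 1) * N + (j - 1)) = gs ((i - 1) * N + (j - 1)) xs"
        using nth[OF ij] unfolding L_def .
      show "gs ((i - 1) * N + (j - 1)) xs = j" using e1 e2 by simp
    qed
    thus ?thesis by (rule disjI2)
  qed
  have gN: "\<And>i j. 1 \<le> i \<Longrightarrow> i \<le> N \<Longrightarrow> 1 \<le> j \<Longrightarrow> j \<le> N \<Longrightarrow>
      gs ((i - 1) * N + (j - 1)) xs \<in> insert 0 (set xs)"
  proof -
    fix i j assume "1 \<le> i" "i \<le> N" "1 \<le> j" "j \<le> N"
    hence "(i - 1) * N + (j - 1) < N^2" by (rule idx_lt)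
    hence "(i - 1) * N + (j - 1) < (k - 1)^2" unfolding N_def .
    thus "gs ((i - 1) * N + (j - 1)) xs \<in> insert 0 (set xs)" by (rule g)
  qed
  have "{1..N} \<subseteq> set xs"
  proof
    fix v assume v: "v \<in> {1..N}"
    hence N1: "1 \<le> N" by simp
    have one: "1 \<in> {1..N}" using N1 by simp
    from c show "v \<in> set xs"
    proof
      assume r: "\<forall>i\<in>{1..N}. \<forall>j\<in>{1..N}. gs ((i - 1) * N + (j - 1)) xs = i"
      have "gs ((v - 1) * N + (1 - 1)) xs = v" using r v one by blast
      moreover have "gs ((v - 1) * N + (1 - 1)) xs \<in> insert 0 (set xs)"
        using gN[of v 1] gN[of 1 v] v N1 by auto
      ultimately show ?thesis using v by auto
    next
      assume r: "\<forall>i\<in>{1..N}. \<forall>j\<in>{1..N}. gs ((i - 1) * N + (j - 1)) xs = j"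
      have "gs ((1 - 1) * N + (v - 1)) xs = v" using r v one by blast
      moreover have "gs ((1 - 1) * N + (v - 1)) xs \<in> insert 0 (set xs)"
        using gN[of v 1] gN[of 1 v] v N1 by auto
      ultimately show ?thesis using v by auto
    qed
  qed
  moreover have "n < N" using assms(2) unfolding N_def .
  ultimately show False using card_bound assms(3) by blast
qed

definition valid :: "nat \<Rightarrow> nat \<Rightarrow> nat list \<Rightarrow> bool" where
  "valid k n xs = (length xs = n \<and> set xs \<subseteq> {..<k})"

lemma inv:
  assumes "k \<ge> 3" "n < k - 1" "g \<in> term_op ((k - 1)^2) (T_op k) n"
  shows "(\<exists>i<n. \<forall>xs. valid k n xs \<longrightarrow> g xs = xs ! i) \<or> (\<forall>xs. valid k n xs \<longrightarrow> g xs = 0)"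
  using assms(3)
proof induction
  case (proj i)
  then show ?case by blast
next
  case (app gs)
  have "\<forall>xs. valid k n xs \<longrightarrow> T_op k (map (\<lambda>j. gs j xs) [0..<(k - 1)^2]) = 0"
  proof (intro allI impI)
    fix xs assume v: "valid k n xs"
    show "T_op k (map (\<lambda>j. gs j xs) [0..<(k - 1)^2]) = 0"
    proof (rule key[OF assms(1,2)])
      show "length xs = n" using v valid_def by simp
      fix j assume "j < (k - 1)^2"
      then have "(\<exists>i<n. \<forall>xs. valid k n xs \<longrightarrow> gs j xs = xs ! i) \<or> (\<forall>xs. valid k n xs \<longrightarrow> gs j xs = 0)"
        using app by blast
      then show "gs j xs \<in> insert 0 (set xs)" using v unfolding valid_def by auto
    qed
  qed
  then show ?case by blast
qed

theorem lemma3p1: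
  fixes k n :: nat
  assumes "k \<ge> 3" and "1 \<le> n" and "n < k - 1"
  shows "clone_n k ((k - 1)^2) (T_op k) n = projections k n \<union> {restr k n (\<lambda>xs. 0)}"
proof
  show "clone_n k ((k - 1)^2) (T_op k) n \<subseteq> projections k n \<union> {restr k n (\<lambda>xs. 0)}"
  proof
    fix f assume "f \<in> clone_n k ((k - 1)^2) (T_op k) n"
    then obtain g where g: "g \<in> term_op ((k - 1)^2) (T_op k) n" and f: "f = restr k n g"
      unfolding clone_n_def by blast
    from inv[OF assms(1,3) g] show "f \<in> projections k n \<union> {restr k n (\<lambda>xs. 0)}"
    proof
      assume "\<exists>i<n. \<forall>xs. valid k n xs \<longrightarrow> g xs = xs ! i"
      then obtain i where i: "i < n" "\<forall>xs. valid k n xs \<longrightarrow> g xs = xs ! i" by blast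
      have "f = restr k n (\<lambda>xs. xs ! i)" unfolding f restr_def using i(2)
        by (auto simp: valid_def)
      thus ?thesis using i(1) unfolding projections_def by blast
    next
      assume z: "\<forall>xs. valid k n xs \<longrightarrow> g xs = 0"
      have "f = restr k n (\<lambda>xs. 0)" unfolding f restr_def using z
        by (auto simp: valid_def)
      thus ?thesis by blast
    qed
  qed
next
  show "projections k n \<union> {restr k n (\<lambda>xs. 0)} \<subseteq> clone_n k ((k - 1)^2) (T_op k) n"
  proof -
    have "projections k n \<subseteq> clone_n k ((k - 1)^2) (T_op k) n"
      unfolding projections_def clone_n_def using term_op.proj by blast
    moreover
    let ?h = "\<lambda>xs. T_op k (map (\<lambda>j. (\<lambda>ys. ys ! 0) xs) [0..<(k - 1)^2])"
    have h: "?h \<in> term_op ((k - 1)^2) (T_op k) n"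
      by (rule term_op.app[where gs = "\<lambda>j ys. ys ! 0"]) (rule term_op.proj, use assms in simp)
    have "restr k n (\<lambda>xs. 0) = restr k n ?h"
    proof
      fix xs show "restr k n (\<lambda>xs. 0) xs = restr k n ?h xs"
      proof (cases "length xs = n \<and> set xs \<subseteq> {..<k}")
        case True
        have "?h xs = 0"
          by (rule key[OF assms(1,3)]) (use True assms in auto)
        then show ?thesis unfolding restr_def using True by simp
      next
        case False
        then show ?thesis by (simp only: restr_def if_not_P[OF False] if_False)
      qed
    qed
    hence "restr k n (\<lambda>xs. 0) \<in> clone_n k ((k - 1)^2) (T_op k) n"
      unfolding clone_n_def using h by blast
    ultimately show ?thesis by blast
  qed
qed

end
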